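(* Let $m,g>0$ and $\epsilon\geq 0$. Consider the planar taut-cable tethered UAV model described in the context, and let $\mathcal{S}_\epsilon$ denote its set of attainable equilibria with safety margin $\epsilon$. Then $\mathcal{S}_\epsilon$ consists exactly of the triples $(\bar r,\bar\alpha,\bar\theta)$ satisfying $\bar r>0$, $\bar\alpha\in[0,\pi]$ and \[ \begin{cases} \bar\theta\in\left(\bar\theta_\epsilon(\bar\alpha),\ \frac{\pi}{2}-\bar\alpha\right) & \text{if } \bar\alpha\in\left[0,\frac{\pi}{2}\right),\\ \bar\theta=0 & \text{if } \bar\alpha=\frac{\pi}{2},\\ \bar\theta\in\left(\frac{\pi}{2}-\bar\alpha,\ \bar\theta_\epsilon(\bar\alpha)\right) & \text{if } \bar\alpha\in\left(\frac{\pi}{2},\pi\right], \end{cases} \] where \[ \bar\theta_\epsilon(\bar\alpha)=\begin{cases}\arctan\left(\frac{\epsilon}{mg\cos\bar\alpha}+\tan\bar\alpha\right)-\bar\alpha & \text{if } \bar\alpha\in\left[0,\frac{\pi}{2}\right),\\[2pt] \arctan\left(\frac{\epsilon}{mg\cos\bar\alpha}+\tan\bar\alpha\right)+\pi-\bar\alpha & \text{if } \bar\alpha\in\left(\frac{\pi}{2},\pi\right],\end{cases} \] with $\arctan$ the principal branch with values in $(-\pi/2,\pi/2)$. Moreover, the cable tension at equilibrium is $\bar T=mg\left(\tan(\bar\alpha+\bar\theta)\cos\bar\alpha-\sin\bar\alpha\right)$ if $\bar\alpha\in[0,\pi]\setminus\{\pi/2\}$, while if $\bar\alpha=\pi/2$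 the equilibrium tension can be any value in $\mathbb{R}_{>0}$ (depending on the constant thrust).
   Context: Model: a planar UAV of mass $m>0$ and moment of inertia $\mathcal{J}>0$, subject to gravity $g>0$, is connected to the ground by a taut cable wound on a winch of radius $\rho>0$ and moment of inertia $\mathcal{I}>0$. Its polar coordinates are the radial position $r>0$ and elevation angle $\alpha\in[0,\pi]$; its pitch angle is $\theta\in(-\pi,\pi]$. Inputs are total thrust $u_1\geq 0$, torque $u_2\in\mathbb{R}$ and winch torque $u_3\in\mathbb{R}$. The taut-cable dynamics are \[ \ddot r=\tfrac{\rho}{\mathcal I}u_3+\tfrac{\rho^2}{\mathcal I}T,\quad \ddot\alpha=-\tfrac{1}{r}\left(2\dot r\dot\alpha+g\cos\alpha\right)+\tfrac{1}{mr}u_1\cos(\alpha+\theta),\quad \ddot\theta=\tfrac{1}{\mathcal J}u_2, \] where the cable tension is $T=mr\dot\alpha^2-mg\sin\alpha+u_1\sin(\alpha+\theta)-m\ddot r$. A triple $(\bar r,\bar\alpha,\bar\theta)$ with $\bar r>0$, $\bar\alpha\in[0,\pi]$, $\bar\theta\in(-\pi,\pi]$ is an equilibrium if there are constant inputs $\bar u_1\geq0,\bar u_2,\bar u_3$ for which the constant trajectory $(r,\alpha,\theta)\equiv(\bar r,\bar\alpha,\bar\theta)$ solves the dynamics; the corresponding equilibrium tension is $\bar T=\bar u_1\sin(\bar\alpha+\bar\theta)-mg\sin\bar\alpha$. Given $\epsilon\geq 0$, the set of attainable equilibria $\mathcal{S}_\epsilon$ is the set of equilibria $(\bar r,\bar\alpha,\bar\theta)$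 admitting such constant inputs with $\bar T>\epsilon$. *)

theory Defs
  imports Complex_Main
begin

definition tension :: "real \<Rightarrow> real \<Rightarrow> real \<Rightarrow> real \<Rightarrow> real \<Rightarrow> real \<Rightarrow> real \<Rightarrow> real \<Rightarrow> real" where
  "tension m g r dalpha alpha theta u1 ddr =
     m * r * dalpha\<^sup>2 - m * g * sin alpha + u1 * sin (alpha + theta) - m * ddr"

definition dynamics ::
  "real \<Rightarrow> real \<Rightarrow> real \<Rightarrow> real \<Rightarrow> real \<Rightarrow>
   real \<Rightarrow> real \<Rightarrow> real \<Rightarrow> real \<Rightarrow> real \<Rightarrow> real \<Rightarrow> real \<Rightarrow>
   real \<Rightarrow> real \<Rightarrow> real \<Rightarrow> real \<Rightarrow> bool" where
  "dynamics m g \<rho> I J r dr ddr alpha dalpha ddalpha theta ddtheta u1 u2 u3 \<longleftrightarrow>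
     ddr = \<rho> / I * u3 + \<rho>\<^sup>2 / I * tension m g r dalpha alpha theta u1 ddr \<and>
     ddalpha = - (1 / r) * (2 * dr * dalpha + g * cos alpha) + 1 / (m * r) * u1 * cos (alpha + theta) \<and>
     ddtheta = 1 / J * u2"

definition equilibrium_inputs ::
  "real \<Rightarrow> real \<Rightarrow> real \<Rightarrow> real \<Rightarrow> real \<Rightarrow> real \<Rightarrow> real \<Rightarrow> real \<Rightarrow>
   real \<Rightarrow> real \<Rightarrow> real \<Rightarrow> bool" where
  "equilibrium_inputs m g \<rho> I J r alpha theta u1 u2 u3 \<longleftrightarrow>
     u1 \<ge> 0 \<and> dynamics m g \<rho> I J r 0 0 alpha 0 0 theta 0 u1 u2 u3"

definition eq_tension :: "real \<Rightarrow> real \<Rightarrow> real \<Rightarrow> real \<Rightarrow> real \<Rightarrow> real" where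
  "eq_tension m g alpha theta u1 = u1 * sin (alpha + theta) - m * g * sin alpha"

definition attainable_equilibria ::
  "real \<Rightarrow> real \<Rightarrow> real \<Rightarrow> real \<Rightarrow> real \<Rightarrow> real \<Rightarrow> (real \<times> real \<times> real) set" where
  "attainable_equilibria m g \<rho> I J \<epsilon> =
     {(r, alpha, theta). r > 0 \<and> alpha \<in> {0..pi} \<and> theta \<in> {-pi<..pi} \<and>
        (\<exists>u1 u2 u3. equilibrium_inputs m g \<rho> I J r alpha theta u1 u2 u3 \<and>
                    eq_tension m g alpha theta u1 > \<epsilon>)}"

text \<open>The boundary angle theta_eps(alpha) (only meaningful for alpha \<noteq> pi/2).\<close>
definition theta_eps :: "real \<Rightarrow> real \<Rightarrow> real \<Rightarrow> real \<Rightarrow> real" where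
  "theta_eps m g \<epsilon> alpha =
     (if alpha < pi / 2
      then arctan (\<epsilon> / (m * g * cos alpha) + tan alpha) - alpha
      else arctan (\<epsilon> / (m * g * cos alpha) + tan alpha) + pi - alpha)"

end

theory Submission
  imports Defs
begin

lemma eqi_iff:
  assumes "m > 0" "\<rho> > 0" "I > 0" "J > 0" "r > 0"
  shows "equilibrium_inputs m g \<rho> I J r a t u1 u2 u3 \<longleftrightarrow>
     u1 \<ge> 0 \<and> u1 * cos (a + t) = m * g * cos a \<and> u2 = 0 \<and> u3 = - \<rho> * eq_tension m g a t u1"
proof -
  have e1: "(0 = \<rho> / I * u3 + \<rho>\<^sup>2 / I * eq_tension m g a t u1) \<longleftrightarrow> u3 = - \<rho> * eq_tension m g a t u1"
  proof -
    have "\<rho> / I * u3 + \<rho>\<^sup>2 / I * eq_tension m g a t u1 = (\<rho> / I) * (u3 + \<rho> * eq_tension m g a t u1)"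
      by (simp add: power2_eq_square algebra_simps)
    then show ?thesis using assms by auto
  qed
  have e2: "(0 = - (1 / r) * (2 * 0 * 0 + g * cos a) + 1 / (m * r) * u1 * cos (a + t)) \<longleftrightarrow>
      u1 * cos (a + t) = m * g * cos a"
    using assms by (auto simp: field_simps)
  have e3: "(0 = 1 / J * u2) \<longleftrightarrow> u2 = 0" using assms by auto
  have "tension m g r 0 a t u1 0 = eq_tension m g a t u1"
    by (simp add: tension_def eq_tension_def)
  then show ?thesis unfolding equilibrium_inputs_def dynamics_def
    using e1 e2 e3 by (simp only:) blast
qed

lemma ex_iff:
  assumes "m > 0" "\<rho> > 0" "I > 0" "J > 0" "r > 0"
  shows "(\<exists>u1 u2 u3. equilibrium_inputs m g \<rho> I J r a t u1 u2 u3 \<and> eq_tension m g a t u1 > e)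
     \<longleftrightarrow> (\<exists>u1\<ge>0. u1 * cos (a + t) = m * g * cos a \<and> u1 * sin (a + t) - m * g * sin a > e)"
  using eqi_iff[OF assms] unfolding eq_tension_def by auto

lemma keyid:
  fixes m g a t :: real
  assumes "cos a \<noteq> 0"
  shows "m * g * cos a * (tan (a + t) - tan a) = m * g * cos a * tan (a + t) - m * g * sin a"
  using assms by (simp add: tan_def right_diff_distrib)

lemma caseA:
  fixes m g a t e :: real
  assumes "m > 0" "g > 0" "cos a > 0"
  shows "(\<exists>u1\<ge>0. u1 * cos (a + t) = m * g * cos a \<and> u1 * sin (a + t) - m * g * sin a > e)
    \<longleftrightarrow> cos (a + t) > 0 \<and> e / (m * g * cos a) + tan a < tan (a + t)"
proof -
  have mgc: "m * g * cos a > 0" using assms by (intro mult_pos_pos) auto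
  have K: "e / (m * g * cos a) + tan a < tan (a + t) \<longleftrightarrow> e < m * g * cos a * tan (a + t) - m * g * sin a"
  proof -
    have "e / (m * g * cos a) + tan a < tan (a + t) \<longleftrightarrow> e / (m * g * cos a) < tan (a + t) - tan a" by linarith
    also have "\<dots> \<longleftrightarrow> e < (tan (a + t) - tan a) * (m * g * cos a)" using pos_divide_less_eq[OF mgc] by blast
    also have "\<dots> \<longleftrightarrow> e < m * g * cos a * tan (a + t) - m * g * sin a"
      using keyid[of a m g t] assms by (simp add: mult.commute)
    finally show ?thesis .
  qed
  show ?thesis
  proof
    assume "\<exists>u1\<ge>0. u1 * cos (a + t) = m * g * cos a \<and> u1 * sin (a + t) - m * g * sin a > e"
    then obtain u1 where u: "u1 \<ge> 0" "u1 * cos (a + t) = m * g * cos a" "u1 * sin (a + t) - m * g * sin a > e"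
      by blast
    have c: "cos (a + t) > 0" using u(1,2) mgc
      by (metis linorder_not_le mult_nonneg_nonpos not_less_iff_gr_or_eq)
    hence u1: "u1 = m * g * cos a / cos (a + t)" using u(2) by (simp add: field_simps)
    have "u1 * sin (a + t) = m * g * cos a * tan (a + t)" unfolding u1 tan_def by simp
    thus "cos (a + t) > 0 \<and> e / (m * g * cos a) + tan a < tan (a + t)" using c u(3) K by simp
  next
    assume h: "cos (a + t) > 0 \<and> e / (m * g * cos a) + tan a < tan (a + t)"
    define u1 where "u1 = m * g * cos a / cos (a + t)"
    have "u1 * sin (a + t) = m * g * cos a * tan (a + t)" unfolding u1_def tan_def by simp
    hence "u1 * sin (a + t) - m * g * sin a > e" using h K by simp
    moreover have "u1 \<ge> 0" using h mgc unfolding u1_def by simp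
    moreover have "u1 * cos (a + t) = m * g * cos a" using h unfolding u1_def by simp
    ultimately show "\<exists>u1\<ge>0. u1 * cos (a + t) = m * g * cos a \<and> u1 * sin (a + t) - m * g * sin a > e"
      by blast
  qed
qed

lemma caseB:
  fixes m g a t e :: real
  assumes "m > 0" "g > 0" "cos a < 0"
  shows "(\<exists>u1\<ge>0. u1 * cos (a + t) = m * g * cos a \<and> u1 * sin (a + t) - m * g * sin a > e)
    \<longleftrightarrow> cos (a + t) < 0 \<and> tan (a + t) < e / (m * g * cos a) + tan a"
proof -
  have mgc: "m * g * cos a < 0" using assms by (intro mult_pos_neg mult_pos_pos) auto
  have K: "tan (a + t) < e / (m * g * cos a) + tan a \<longleftrightarrow> e < m * g * cos a * tan (a + t) - m * g * sin a"
  proof -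
    have "tan (a + t) < e / (m * g * cos a) + tan a \<longleftrightarrow> tan (a + t) - tan a < e / (m * g * cos a)" by linarith
    also have "\<dots> \<longleftrightarrow> e < (tan (a + t) - tan a) * (m * g * cos a)" using neg_less_divide_eq[OF mgc] by blast
    also have "\<dots> \<longleftrightarrow> e < m * g * cos a * tan (a + t) - m * g * sin a"
      using keyid[of a m g t] assms by (simp add: mult.commute)
    finally show ?thesis .
  qed
  show ?thesis
  proof
    assume "\<exists>u1\<ge>0. u1 * cos (a + t) = m * g * cos a \<and> u1 * sin (a + t) - m * g * sin a > e"
    then obtain u1 where u: "u1 \<ge> 0" "u1 * cos (a + t) = m * g * cos a" "u1 * sin (a + t) - m * g * sin a > e"
      by blast
    have c: "cos (a + t) < 0" using u(1,2) mgc
      by (metis linorder_not_le mult_nonneg_nonneg)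
    hence u1: "u1 = m * g * cos a / cos (a + t)" using u(2) by (simp add: field_simps)
    have "u1 * sin (a + t) = m * g * cos a * tan (a + t)" unfolding u1 tan_def by simp
    thus "cos (a + t) < 0 \<and> tan (a + t) < e / (m * g * cos a) + tan a" using c u(3) K by simp
  next
    assume h: "cos (a + t) < 0 \<and> tan (a + t) < e / (m * g * cos a) + tan a"
    define u1 where "u1 = m * g * cos a / cos (a + t)"
    have "u1 * sin (a + t) = m * g * cos a * tan (a + t)" unfolding u1_def tan_def by simp
    hence "u1 * sin (a + t) - m * g * sin a > e" using h K by simp
    moreover have "u1 \<ge> 0" using h mgc unfolding u1_def by (simp add: divide_nonpos_neg)
    moreover have "u1 * cos (a + t) = m * g * cos a" using h unfolding u1_def by simp
    ultimately show "\<exists>u1\<ge>0. u1 * cos (a + t) = m * g * cos a \<and> u1 * sin (a + t) - m * g * sin a > e"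
      by blast
  qed
qed

lemma cos_pos_range:
  fixes x :: real
  assumes "-pi < x" "x < 3 * pi / 2" "cos x > 0"
  shows "-(pi/2) < x \<and> x < pi/2"
proof (rule ccontr)
  assume "\<not> ?thesis"
  then consider "x \<le> -(pi/2)" | "x \<ge> pi/2" by linarith
  then show False
  proof cases
    case 1
    have "cos (x + pi) \<ge> 0" using 1 assms by (intro cos_ge_zero) auto
    then show False using assms by simp
  next
    case 2
    have "cos (x - pi) \<ge> 0" using 2 assms by (intro cos_ge_zero) auto
    then show False using assms by simp
  qed
qed

lemma cos_neg_range:
  fixes x :: real
  assumes "-(pi/2) < x" "x \<le> 2 * pi" "cos x < 0"
  shows "pi/2 < x \<and> x < 3 * pi / 2"
proof (rule ccontr)
  assume "\<not> ?thesis"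
  then consider "x \<le> pi/2" | "x \<ge> 3 * pi / 2" by linarith
  then show False
  proof cases
    case 1
    have "cos x \<ge> 0" using 1 assms by (intro cos_ge_zero) auto
    then show False using assms by simp
  next
    case 2
    have "cos (x - 2 * pi) \<ge> 0" using 2 assms by (intro cos_ge_zero) auto
    moreover have "cos (x - 2 * pi) = cos x" using cos_periodic[of "x - 2 * pi"] by simp
    ultimately show False using assms by simp
  qed
qed

lemma cos_pos_a: "0 \<le> (a::real) \<Longrightarrow> a < pi/2 \<Longrightarrow> cos a > 0"
  by (intro cos_gt_zero_pi) auto

lemma cos_neg_a: "pi/2 < (a::real) \<Longrightarrow> a \<le> pi \<Longrightarrow> cos a < 0"
proof -
  assume "pi/2 < a" "a \<le> pi"
  hence "cos (a - pi) > 0" by (intro cos_gt_zero_pi) auto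
  thus "cos a < 0" by simp
qed

lemma condA:
  fixes m g e a t :: real
  assumes "m > 0" "g > 0" "0 \<le> a" "a < pi/2"
  shows "(t \<in> {-pi<..pi} \<and> (\<exists>u1\<ge>0. u1 * cos (a + t) = m * g * cos a \<and> u1 * sin (a + t) - m * g * sin a > e))
    \<longleftrightarrow> theta_eps m g e a < t \<and> t < pi / 2 - a"
proof -
  define K where "K = e / (m * g * cos a) + tan a"
  have ca: "cos a > 0" using assms cos_pos_a by auto
  have te: "theta_eps m g e a = arctan K - a" using assms unfolding theta_eps_def K_def by simp
  have ab: "- (pi/2) < arctan K" "arctan K < pi/2" using arctan_bounded by auto
  show ?thesis unfolding caseA[OF assms(1,2) ca] K_def[symmetric] te
  proof
    assume h: "t \<in> {-pi<..pi} \<and> 0 < cos (a + t) \<and> K < tan (a + t)"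
    have r: "-(pi/2) < a + t \<and> a + t < pi/2" using h assms by (intro cos_pos_range) auto
    have "arctan K < arctan (tan (a + t))" using h arctan_less_iff by blast
    hence "arctan K < a + t" using r arctan_tan by simp
    thus "arctan K - a < t \<and> t < pi / 2 - a" using r by linarith
  next
    assume h: "arctan K - a < t \<and> t < pi / 2 - a"
    have r: "-(pi/2) < a + t \<and> a + t < pi/2" using h ab by linarith
    have "arctan K < arctan (tan (a + t))" using h r arctan_tan by simp
    hence "K < tan (a + t)" using arctan_less_iff by blast
    moreover have "cos (a + t) > 0" using r cos_gt_zero_pi by auto
    moreover have "t \<in> {-pi<..pi}" using r assms by auto
    ultimately show "t \<in> {-pi<..pi} \<and> 0 < cos (a + t) \<and> K < tan (a + t)" by blast
  qed
qed

lemma condB: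
  fixes m g e a t :: real
  assumes "m > 0" "g > 0" "pi/2 < a" "a \<le> pi"
  shows "(t \<in> {-pi<..pi} \<and> (\<exists>u1\<ge>0. u1 * cos (a + t) = m * g * cos a \<and> u1 * sin (a + t) - m * g * sin a > e))
    \<longleftrightarrow> pi / 2 - a < t \<and> t < theta_eps m g e a"
proof -
  define K where "K = e / (m * g * cos a) + tan a"
  have ca: "cos a < 0" using assms cos_neg_a by auto
  have te: "theta_eps m g e a = arctan K + pi - a" using assms unfolding theta_eps_def K_def by simp
  have ab: "- (pi/2) < arctan K" "arctan K < pi/2" using arctan_bounded by auto
  have tp: "tan (a + t) = tan (a + t - pi)" using tan_periodic_pi[of "a + t - pi"] by simp
  have cp: "cos (a + t) = - cos (a + t - pi)" by simp
  show ?thesis unfolding caseB[OF assms(1,2) ca] K_def[symmetric] te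
  proof
    assume h: "t \<in> {-pi<..pi} \<and> cos (a + t) < 0 \<and> tan (a + t) < K"
    have r: "pi/2 < a + t \<and> a + t < 3 * pi / 2" using h assms by (intro cos_neg_range) auto
    have "arctan (tan (a + t - pi)) < arctan K" using h tp arctan_less_iff by metis
    hence "a + t - pi < arctan K" using r arctan_tan[of "a + t - pi"] by simp
    thus "pi / 2 - a < t \<and> t < arctan K + pi - a" using r by linarith
  next
    assume h: "pi / 2 - a < t \<and> t < arctan K + pi - a"
    have r: "-(pi/2) < a + t - pi \<and> a + t - pi < pi/2" using h ab by linarith
    have "arctan (tan (a + t - pi)) < arctan K" using h r arctan_tan by simp
    hence "tan (a + t) < K" using arctan_less_iff tp by metis
    moreover have "cos (a + t) < 0" using r cos_gt_zero_pi cp by (metis neg_less_0_iff_less)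
    moreover have "t \<in> {-pi<..pi}" using h ab assms by auto
    ultimately show "t \<in> {-pi<..pi} \<and> cos (a + t) < 0 \<and> tan (a + t) < K" by blast
  qed
qed

lemma condH:
  fixes m g e t :: real
  assumes "m > 0" "g > 0" "e \<ge> 0"
  shows "(t \<in> {-pi<..pi} \<and> (\<exists>u1\<ge>0. u1 * cos (pi/2 + t) = m * g * cos (pi/2) \<and> u1 * sin (pi/2 + t) - m * g * sin (pi/2) > e))
    \<longleftrightarrow> t = 0"
proof
  assume h: "t \<in> {-pi<..pi} \<and> (\<exists>u1\<ge>0. u1 * cos (pi/2 + t) = m * g * cos (pi/2) \<and> u1 * sin (pi/2 + t) - m * g * sin (pi/2) > e)"
  then obtain u1 where u: "u1 \<ge> 0" "u1 * sin t = 0" "u1 * cos t - m * g > e"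
    by (auto simp: cos_add sin_add)
  have mg: "m * g > 0" using assms by simp
  have "u1 * cos t > 0" using u(3) mg assms by linarith
  hence u1: "u1 > 0" and ct: "cos t > 0" using u(1)
    by (auto simp: zero_less_mult_iff)
  hence st: "sin t = 0" using u(2) by simp
  show "t = 0"
  proof (rule ccontr)
    assume "t \<noteq> 0"
    then consider "0 < t \<and> t < pi" | "t = pi" | "-pi < t \<and> t < 0" using h by force
    then show False
    proof cases
      case 1 then show False using sin_gt_zero[of t] st by auto
    next
      case 2 then show False using ct by simp
    next
      case 3 then show False using sin_gt_zero[of "-t"] st by auto
    qed
  qed
next
  assume "t = 0"
  moreover have "(m * g + e + 1) * cos (pi/2) = m * g * cos (pi/2)" by simp
  moreover have "(m * g + e + 1) * sin (pi/2) - m * g * sin (pi/2) > e" by simp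
  moreover have "m * g + e + 1 \<ge> 0" using assms by (simp add: add_nonneg_nonneg)
  ultimately show "t \<in> {-pi<..pi} \<and> (\<exists>u1\<ge>0. u1 * cos (pi/2 + t) = m * g * cos (pi/2) \<and> u1 * sin (pi/2 + t) - m * g * sin (pi/2) > e)"
    by (auto intro!: exI[of _ "m * g + e + 1"])
qed

theorem proposition1:
  fixes m g \<rho> I J \<epsilon> :: real
  assumes "m > 0" and "g > 0" and "\<rho> > 0" and "I > 0" and "J > 0" and "\<epsilon> \<ge> 0"
  shows "attainable_equilibria m g \<rho> I J \<epsilon> =
           {(r, alpha, theta). r > 0 \<and> 0 \<le> alpha \<and> alpha \<le> pi \<and>
              ((0 \<le> alpha \<and> alpha < pi / 2 \<longrightarrow>
                   theta_eps m g \<epsilon> alpha < theta \<and> theta < pi / 2 - alpha) \<and>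
               (alpha = pi / 2 \<longrightarrow> theta = 0) \<and>
               (pi / 2 < alpha \<and> alpha \<le> pi \<longrightarrow>
                   pi / 2 - alpha < theta \<and> theta < theta_eps m g \<epsilon> alpha))}
         \<and> (\<forall>r alpha theta u1 u2 u3.
              r > 0 \<and> alpha \<in> {0..pi} \<and> alpha \<noteq> pi / 2 \<and> theta \<in> {-pi<..pi} \<and>
              equilibrium_inputs m g \<rho> I J r alpha theta u1 u2 u3 \<longrightarrow>
              eq_tension m g alpha theta u1
                = m * g * (tan (alpha + theta) * cos alpha - sin alpha))
         \<and> (\<forall>r T. r > 0 \<and> T > 0 \<longrightarrow>
              (\<exists>u1 u2 u3. equilibrium_inputs m g \<rho> I J r (pi / 2) 0 u1 u2 u3 \<and>
                          eq_tension m g (pi / 2) 0 u1 = T))"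
proof (intro conjI)
  show "attainable_equilibria m g \<rho> I J \<epsilon> =
           {(r, alpha, theta). r > 0 \<and> 0 \<le> alpha \<and> alpha \<le> pi \<and>
              ((0 \<le> alpha \<and> alpha < pi / 2 \<longrightarrow>
                   theta_eps m g \<epsilon> alpha < theta \<and> theta < pi / 2 - alpha) \<and>
               (alpha = pi / 2 \<longrightarrow> theta = 0) \<and>
               (pi / 2 < alpha \<and> alpha \<le> pi \<longrightarrow>
                   pi / 2 - alpha < theta \<and> theta < theta_eps m g \<epsilon> alpha))}"
  proof (rule set_eqI, clarify)
    fix r a t :: real
    show "((r, a, t) \<in> attainable_equilibria m g \<rho> I J \<epsilon>) =
      ((r, a, t) \<in> {(r, alpha, theta). r > 0 \<and> 0 \<le> alpha \<and> alpha \<le> pi \<and>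
              ((0 \<le> alpha \<and> alpha < pi / 2 \<longrightarrow>
                   theta_eps m g \<epsilon> alpha < theta \<and> theta < pi / 2 - alpha) \<and>
               (alpha = pi / 2 \<longrightarrow> theta = 0) \<and>
               (pi / 2 < alpha \<and> alpha \<le> pi \<longrightarrow>
                   pi / 2 - alpha < theta \<and> theta < theta_eps m g \<epsilon> alpha))})"
    proof (cases "r > 0 \<and> 0 \<le> a \<and> a \<le> pi")
      case False
      then show ?thesis unfolding attainable_equilibria_def by auto
    next
      case True
      hence ex: "(\<exists>u1 u2 u3. equilibrium_inputs m g \<rho> I J r a t u1 u2 u3 \<and> eq_tension m g a t u1 > \<epsilon>)
       \<longleftrightarrow> (\<exists>u1\<ge>0. u1 * cos (a + t) = m * g * cos a \<and> u1 * sin (a + t) - m * g * sin a > \<epsilon>)"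
        using ex_iff assms by blast
      consider "a < pi/2" | "a = pi/2" | "a > pi/2" by linarith
      then show ?thesis
      proof cases
        case 1
        then show ?thesis using condA[OF assms(1,2), of a t \<epsilon>] True ex
          unfolding attainable_equilibria_def by auto
      next
        case 2
        have c: "(t \<in> {-pi<..pi} \<and> (\<exists>u1 u2 u3. equilibrium_inputs m g \<rho> I J r a t u1 u2 u3 \<and> eq_tension m g a t u1 > \<epsilon>)) \<longleftrightarrow> t = 0"
          unfolding ex unfolding 2 by (rule condH[OF assms(1,2,6)])
        have mm: "(r, a, t) \<in> attainable_equilibria m g \<rho> I J \<epsilon> \<longleftrightarrow> t = 0"
          using c True unfolding attainable_equilibria_def by auto
        show ?thesis unfolding mm unfolding 2 using True by auto
      next
        case 3
        then show ?thesis using condB[OF assms(1,2), of a t \<epsilon>] True ex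
          unfolding attainable_equilibria_def by auto
      qed
    qed
  qed
next
  show "\<forall>r alpha theta u1 u2 u3.
              r > 0 \<and> alpha \<in> {0..pi} \<and> alpha \<noteq> pi / 2 \<and> theta \<in> {-pi<..pi} \<and>
              equilibrium_inputs m g \<rho> I J r alpha theta u1 u2 u3 \<longrightarrow>
              eq_tension m g alpha theta u1
                = m * g * (tan (alpha + theta) * cos alpha - sin alpha)"
  proof (intro allI impI)
    fix r a t u1 u2 u3 :: real
    assume h: "r > 0 \<and> a \<in> {0..pi} \<and> a \<noteq> pi / 2 \<and> t \<in> {-pi<..pi} \<and>
              equilibrium_inputs m g \<rho> I J r a t u1 u2 u3"
    hence u: "u1 * cos (a + t) = m * g * cos a" using eqi_iff assms by blast
    have "cos a \<noteq> 0"
    proof (cases "a < pi/2")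
      case True thus ?thesis using cos_pos_a h by force
    next
      case False thus ?thesis using cos_neg_a h by force
    qed
    hence c: "cos (a + t) \<noteq> 0" using u assms by auto
    hence u1: "u1 = m * g * cos a / cos (a + t)" using u by (simp add: field_simps)
    show "eq_tension m g a t u1 = m * g * (tan (a + t) * cos a - sin a)"
      unfolding eq_tension_def u1 tan_def by (simp add: algebra_simps)
  qed
next
  show "\<forall>r T. r > 0 \<and> T > 0 \<longrightarrow>
              (\<exists>u1 u2 u3. equilibrium_inputs m g \<rho> I J r (pi / 2) 0 u1 u2 u3 \<and>
                          eq_tension m g (pi / 2) 0 u1 = T)"
  proof (intro allI impI)
    fix r T :: real
    assume h: "r > 0 \<and> T > 0"
    have e: "eq_tension m g (pi / 2) 0 (T + m * g) = T" unfolding eq_tension_def by simp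
    have "equilibrium_inputs m g \<rho> I J r (pi / 2) 0 (T + m * g) 0 (- \<rho> * T)"
      using eqi_iff[OF assms(1,3,4,5), of r g "pi/2" 0 "T + m * g" 0 "- \<rho> * T"] h assms e
      by (simp add: add_nonneg_nonneg)
    thus "\<exists>u1 u2 u3. equilibrium_inputs m g \<rho> I J r (pi / 2) 0 u1 u2 u3 \<and>
                          eq_tension m g (pi / 2) 0 u1 = T" using e by blast
  qed
qed

end
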